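(* Let $\epsilon\ge0$ and let $\mu,\nu$ be finite positive measures on $\mathbb{R}$, absolutely continuous with respect to Lebesgue measure, with $\mu(\mathbb{R})=\nu(\mathbb{R})=U$. Let $F(x)=\mu((-\infty,x])$, $G(x)=\nu((-\infty,x])$, and $F^{-1}(t)=\inf\{x\in\mathbb{R}:F(x)\ge t\}$, $G^{-1}(t)=\inf\{x:G(x)\ge t\}$ for $t\in(0,U)$. Then $D_\epsilon(\mu,\nu)=0$ if and only if $\sup_{t\in(0,U)}|F^{-1}(t)-G^{-1}(t)|\le 2\epsilon$.
   Context: $D_\epsilon(\mu,\nu)=\inf_\pi\pi\big(\{(x,x'):|x-x'|>2\epsilon\}\big)$, the infimum over measures $\pi$ on $\mathbb{R}\times\mathbb{R}$ with marginals $\mu$ and $\nu$. *)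

theory Defs
  imports "HOL-Probability.Probability"
begin

definition couplings :: "real measure \<Rightarrow> real measure \<Rightarrow> (real \<times> real) measure set" where
  "couplings \<mu> \<nu> = {\<pi>. sets \<pi> = sets (borel \<Otimes>\<^sub>M borel) \<and>
       distr \<pi> borel fst = \<mu> \<and> distr \<pi> borel snd = \<nu>}"

definition D_eps :: "real \<Rightarrow> real measure \<Rightarrow> real measure \<Rightarrow> ennreal" where
  "D_eps \<epsilon> \<mu> \<nu> = (INF \<pi>\<in>couplings \<mu> \<nu>. emeasure \<pi> {p. \<bar>fst p - snd p\<bar> > 2 * \<epsilon>})"

definition cdf_of :: "real measure \<Rightarrow> real \<Rightarrow> real" where
  "cdf_of \<mu> x = measure \<mu> {..x}"

definition qinv :: "real measure \<Rightarrow> real \<Rightarrow> real" where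
  "qinv \<mu> t = Inf {x. cdf_of \<mu> x \<ge> t}"

end

theory Submission
  imports Defs
begin

lemma qinv_le_iff:
  assumes fb: "finite_borel_measure M"
    and t: "0 < t" "t < measure M (space M)"
  shows "qinv M t \<le> x \<longleftrightarrow> t \<le> cdf_of M x"
proof -
  interpret finite_borel_measure M by fact
  have cdfeq: "cdf_of M = cdf M" by (auto simp: cdf_of_def cdf_def)
  define S where "S = {x. t \<le> cdf M x}"
  have "eventually (\<lambda>x. cdf M x > t) at_top"
    using cdf_lim_at_top t(2) by (rule order_tendstoD)
  then obtain a where a: "cdf M a > t" by (metis eventually_at_top_linorder order_refl)
  have ne: "S \<noteq> {}" using a by (auto simp: S_def intro!: exI[of _ a])
  have "eventually (\<lambda>x. cdf M x < t) at_bot"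
    using cdf_lim_at_bot t(1) by (rule order_tendstoD)
  then obtain b where b: "\<And>x. x \<le> b \<Longrightarrow> cdf M x < t" by (metis eventually_at_bot_linorder)
  have bdd: "bdd_below S"
    unfolding bdd_below_def S_def
    by (metis b linorder_not_le mem_Collect_eq order_less_imp_le)
  have inS: "Inf S \<in> S"
  proof -
    let ?c = "Inf S"
    have "eventually (\<lambda>y. t \<le> cdf M y) (at_right ?c)"
    proof (rule eventually_at_rightI[of _ "?c + 1"])
      fix y assume "y \<in> {?c<..<?c + 1}"
      then obtain s where "s \<in> S" "s < y" using ne by (meson cInf_lessD greaterThanLessThan_iff)
      then show "t \<le> cdf M y" unfolding S_def using cdf_nondecreasing[of s y] by auto
    qed simp
    moreover have "(cdf M \<longlongrightarrow> cdf M ?c) (at_right ?c)"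
      using cdf_is_right_cont by (simp add: continuous_within)
    ultimately have "t \<le> cdf M ?c"
      using tendsto_lowerbound trivial_limit_at_right_real by blast
    then show ?thesis by (simp add: S_def)
  qed
  show ?thesis
  proof
    assume "qinv M t \<le> x"
    then have "Inf S \<le> x" by (simp add: qinv_def S_def cdfeq)
    then show "t \<le> cdf_of M x" using inS cdf_nondecreasing[of "Inf S" x] by (auto simp: S_def cdfeq)
  next
    assume "t \<le> cdf_of M x"
    then have "x \<in> S" by (simp add: S_def cdfeq)
    then show "qinv M t \<le> x" using bdd by (simp add: qinv_def S_def cdfeq[symmetric] cInf_lower)
  qed
qed

lemma qinv_mono:
  assumes fb: "finite_borel_measure M"
  shows "mono_on {0<..<measure M (space M)} (qinv M)"
proof (rule mono_onI)
  fix s t assume st: "s \<in> {0<..<measure M (space M)}" "t \<in> {0<..<measure M (space M)}" "s \<le> t"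
  have "t \<le> cdf_of M (qinv M t)" using qinv_le_iff[OF fb, of t "qinv M t"] st by auto
  then show "qinv M s \<le> qinv M t" using qinv_le_iff[OF fb, of s "qinv M t"] st by auto
qed

lemma qinv_meas:
  assumes fb: "finite_borel_measure M"
  shows "qinv M \<in> borel_measurable (restrict_space lborel {0<..<measure M (space M)})"
  using borel_measurable_mono_on_fnc[OF qinv_mono[OF fb]]
  by (simp add: measurable_cong_sets sets_restrict_space)

lemma qinv_distr:
  assumes fb: "finite_borel_measure M"
  shows "distr (restrict_space lborel {0<..<measure M (space M)}) borel (qinv M) = M"
proof -
  interpret finite_borel_measure M by fact
  define U where "U = measure M (space M)"
  define Q where "Q = restrict_space lborel {0<..<U}"
  have meas: "qinv M \<in> borel_measurable Q" using qinv_meas[OF fb] by (simp add: Q_def U_def)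
  have U0: "0 \<le> U" by (simp add: U_def)
  have spQ: "space Q = {0<..<U}" by (simp add: Q_def)
  have emQ: "emeasure Q A = emeasure lborel A" if "A \<subseteq> {0<..<U}" for A
    unfolding Q_def by (rule emeasure_restrict_space) (use that in auto)
  let ?D = "distr Q borel (qinv M)"
  have emD: "emeasure ?D {..x} = ennreal (cdf M x)" for x
  proof -
    let ?c = "cdf M x"
    have c: "0 \<le> ?c" "?c \<le> U" using cdf_nonneg cdf_bounded by (auto simp: U_def)
    have "emeasure ?D {..x} = emeasure Q (qinv M -` {..x} \<inter> space Q)"
      by (rule emeasure_distr[OF meas]) simp
    also have "qinv M -` {..x} \<inter> space Q = {0<..<U} \<inter> {..?c}"
      using qinv_le_iff[OF fb] by (auto simp: spQ U_def cdf_of_def cdf_def)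
    also have "emeasure Q ({0<..<U} \<inter> {..?c}) = emeasure lborel ({0<..<U} \<inter> {..?c})"
      by (rule emQ) auto
    also have "\<dots> = ennreal ?c"
    proof (cases "?c = U")
      case True
      then have "{0<..<U} \<inter> {..?c} = {0<..<U}" by auto
      then show ?thesis using True U0 by simp
    next
      case False
      then have "{0<..<U} \<inter> {..?c} = {0<..?c}" using c by auto
      then show ?thesis using c by simp
    qed
    finally show ?thesis .
  qed
  have fbD: "finite_borel_measure ?D"
  proof -
    have "emeasure ?D UNIV = emeasure Q (qinv M -` UNIV \<inter> space Q)"
      by (rule emeasure_distr[OF meas]) simp
    also have "\<dots> = emeasure lborel {0<..<U}" using emQ spQ by simp
    also have "\<dots> = ennreal U" using U0 by simp
    finally have "emeasure ?D (space ?D) \<noteq> \<infinity>" by simp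
    then show ?thesis
      by (simp add: finite_borel_measure_def finite_borel_measure_axioms_def finite_measureI)
  qed
  have "cdf ?D = cdf M"
  proof
    fix x
    have "cdf ?D x = enn2real (emeasure ?D {..x})"
      by (simp add: cdf_def measure_def)
    then show "cdf ?D x = cdf M x" using emD cdf_nonneg by simp
  qed
  then have "?D = M" using cdf_unique'[OF fbD fb] by simp
  then show ?thesis by (simp add: Q_def U_def)
qed

lemma cdf_shift:
  assumes D: "D_eps \<epsilon> \<mu> \<nu> = 0"
  shows "emeasure \<mu> {..x} \<le> emeasure \<nu> {..x + 2 * \<epsilon>}"
proof (rule ennreal_le_epsilon)
  fix e :: real assume e: "0 < e"
  let ?B = "{p::real\<times>real. \<bar>fst p - snd p\<bar> > 2 * \<epsilon>}"
  have "D_eps \<epsilon> \<mu> \<nu> < ennreal e" using D e by simp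
  then obtain \<pi> where pi: "\<pi> \<in> couplings \<mu> \<nu>" and lt: "emeasure \<pi> ?B < ennreal e"
    unfolding D_eps_def by (auto simp: INF_less_iff)
  have sets: "sets \<pi> = sets (borel \<Otimes>\<^sub>M borel)" and m1: "distr \<pi> borel fst = \<mu>"
    and m2: "distr \<pi> borel snd = \<nu>" using pi by (auto simp: couplings_def)
  have sp: "space \<pi> = UNIV" using sets_eq_imp_space_eq[OF sets] by (simp add: space_pair_measure)
  have mf: "fst \<in> measurable \<pi> borel" using measurable_cong_sets[OF sets refl] measurable_fst by auto
  have ms: "snd \<in> measurable \<pi> borel" using measurable_cong_sets[OF sets refl] measurable_snd by auto
  have Bm: "?B \<in> sets \<pi>"
  proof -
    have "Measurable.pred (borel \<Otimes>\<^sub>M borel) (\<lambda>p::real\<times>real. \<bar>fst p - snd p\<bar> > 2 * \<epsilon>)"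
      by measurable
    then show ?thesis by (simp add: sets pred_def space_pair_measure)
  qed
  have "emeasure \<mu> {..x} = emeasure \<pi> (fst -` {..x} \<inter> space \<pi>)"
    using emeasure_distr[OF mf, of "{..x}"] m1 by simp
  also have "\<dots> \<le> emeasure \<pi> ((snd -` {..x + 2 * \<epsilon>} \<inter> space \<pi>) \<union> ?B)"
  proof (rule emeasure_mono)
    show "fst -` {..x} \<inter> space \<pi> \<subseteq> snd -` {..x + 2 * \<epsilon>} \<inter> space \<pi> \<union> ?B"
      using sp by auto
    show "snd -` {..x + 2 * \<epsilon>} \<inter> space \<pi> \<union> ?B \<in> sets \<pi>"
      using Bm measurable_sets[OF ms, of "{..x + 2 * \<epsilon>}"] by auto
  qed
  also have "\<dots> \<le> emeasure \<pi> (snd -` {..x + 2 * \<epsilon>} \<inter> space \<pi>) + emeasure \<pi> ?B"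
    using Bm measurable_sets[OF ms, of "{..x + 2 * \<epsilon>}"] by (intro emeasure_subadditive) auto
  also have "emeasure \<pi> (snd -` {..x + 2 * \<epsilon>} \<inter> space \<pi>) = emeasure \<nu> {..x + 2 * \<epsilon>}"
    using emeasure_distr[OF ms, of "{..x + 2 * \<epsilon>}"] m2 by simp
  finally show "emeasure \<mu> {..x} \<le> emeasure \<nu> {..x + 2 * \<epsilon>} + ennreal e"
    using lt by (meson add_left_mono less_imp_le order_trans)
qed

lemma qinv_shift:
  assumes fm: "finite_borel_measure \<mu>" and fn: "finite_borel_measure \<nu>"
    and eqU: "measure \<nu> (space \<nu>) = measure \<mu> (space \<mu>)"
    and t: "0 < t" "t < measure \<mu> (space \<mu>)"
    and sh: "\<And>x. cdf_of \<mu> x \<le> cdf_of \<nu> (x + c)"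
  shows "qinv \<nu> t \<le> qinv \<mu> t + c"
proof -
  have "t \<le> cdf_of \<mu> (qinv \<mu> t)" using qinv_le_iff[OF fm t, of "qinv \<mu> t"] by simp
  also have "\<dots> \<le> cdf_of \<nu> (qinv \<mu> t + c)" by (rule sh)
  finally show ?thesis using qinv_le_iff[OF fn, of t] t eqU by simp
qed

lemma cdf_of_shift:
  assumes fm: "finite_borel_measure \<mu>" and fn: "finite_borel_measure \<nu>"
    and D: "D_eps \<epsilon> \<mu> \<nu> = 0"
  shows "cdf_of \<mu> x \<le> cdf_of \<nu> (x + 2 * \<epsilon>)"
proof -
  interpret m: finite_borel_measure \<mu> by fact
  interpret n: finite_borel_measure \<nu> by fact
  show ?thesis using cdf_shift[OF D, of x]
    by (simp add: cdf_of_def m.emeasure_eq_measure n.emeasure_eq_measure)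
qed

lemma D_eps_sym: "D_eps \<epsilon> \<mu> \<nu> = D_eps \<epsilon> \<nu> \<mu>"
proof -
  let ?sw = "\<lambda>\<pi>::(real\<times>real) measure. distr \<pi> (borel \<Otimes>\<^sub>M borel) (\<lambda>(x,y). (y,x))"
  have *: "D_eps \<epsilon> \<nu> \<mu> \<le> D_eps \<epsilon> \<mu> \<nu>" for \<mu> \<nu>
    unfolding D_eps_def
  proof (rule INF_greatest)
    fix \<pi> assume pi: "\<pi> \<in> couplings \<mu> \<nu>"
    have sets: "sets \<pi> = sets (borel \<Otimes>\<^sub>M borel)" and m1: "distr \<pi> borel fst = \<mu>"
      and m2: "distr \<pi> borel snd = \<nu>" using pi by (auto simp: couplings_def)
    have msw: "(\<lambda>(x,y). (y,x)) \<in> measurable \<pi> (borel \<Otimes>\<^sub>M (borel::real measure))"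
      by (subst measurable_cong_sets[OF sets refl]) (rule measurable_pair_swap')
    have sp: "space \<pi> = UNIV" using sets_eq_imp_space_eq[OF sets] by (simp add: space_pair_measure)
    have c: "?sw \<pi> \<in> couplings \<nu> \<mu>"
      unfolding couplings_def
    proof (intro CollectI conjI)
      show "distr (?sw \<pi>) borel fst = \<nu>"
      proof -
        have "distr (?sw \<pi>) borel fst = distr \<pi> borel (fst \<circ> (\<lambda>(x,y). (y,x)))"
          by (rule distr_distr[OF measurable_fst msw])
        also have "\<dots> = distr \<pi> borel snd" by (rule distr_cong) (auto simp: split_beta)
        finally show ?thesis using m2 by simp
      qed
      show "distr (?sw \<pi>) borel snd = \<mu>"
      proof -
        have "distr (?sw \<pi>) borel snd = distr \<pi> borel (snd \<circ> (\<lambda>(x,y). (y,x)))"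
          by (rule distr_distr[OF measurable_snd msw])
        also have "\<dots> = distr \<pi> borel fst" by (rule distr_cong) (auto simp: split_beta)
        finally show ?thesis using m1 by simp
      qed
    qed simp
    have e: "emeasure (?sw \<pi>) {p. \<bar>fst p - snd p\<bar> > 2 * \<epsilon>} = emeasure \<pi> {p. \<bar>fst p - snd p\<bar> > 2 * \<epsilon>}"
    proof -
      have "Measurable.pred (borel \<Otimes>\<^sub>M borel) (\<lambda>p::real\<times>real. \<bar>fst p - snd p\<bar> > 2 * \<epsilon>)"
        by measurable
      then have Bm: "{p::real\<times>real. \<bar>fst p - snd p\<bar> > 2 * \<epsilon>} \<in> sets (borel \<Otimes>\<^sub>M borel)"
        by (simp add: pred_def space_pair_measure)
      have "(\<lambda>(x,y). (y,x)) -` {p::real\<times>real. \<bar>fst p - snd p\<bar> > 2 * \<epsilon>} \<inter> space \<pi> = {p. \<bar>fst p - snd p\<bar> > 2 * \<epsilon>}"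
        using sp by auto
      then show ?thesis using emeasure_distr[OF msw Bm] by simp
    qed
    show "(INF \<pi>\<in>couplings \<nu> \<mu>. emeasure \<pi> {p. \<bar>fst p - snd p\<bar> > 2 * \<epsilon>}) \<le> emeasure \<pi> {p. \<bar>fst p - snd p\<bar> > 2 * \<epsilon>}"
      using INF_lower[OF c, of "\<lambda>\<pi>. emeasure \<pi> {p. \<bar>fst p - snd p\<bar> > 2 * \<epsilon>}"] e by simp
  qed
  show ?thesis using *[of \<mu> \<nu>] *[of \<nu> \<mu>] by (rule antisym)
qed

theorem theorem6:
  fixes \<epsilon> U :: real and \<mu> \<nu> :: "real measure"
  assumes "\<epsilon> \<ge> 0" and "U \<ge> 0"
    and "sets \<mu> = sets borel" and "sets \<nu> = sets borel"
    and "finite_measure \<mu>" and "finite_measure \<nu>"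
    and "absolutely_continuous lborel \<mu>" and "absolutely_continuous lborel \<nu>"
    and "emeasure \<mu> UNIV = ennreal U" and "emeasure \<nu> UNIV = ennreal U"
  shows "D_eps \<epsilon> \<mu> \<nu> = 0 \<longleftrightarrow>
    (SUP t\<in>{0<..<U}. ereal \<bar>qinv \<mu> t - qinv \<nu> t\<bar>) \<le> ereal (2 * \<epsilon>)"
proof -
  have fm: "finite_borel_measure \<mu>" using assms(3,5)
    by (simp add: finite_borel_measure_def finite_borel_measure_axioms_def)
  have fn: "finite_borel_measure \<nu>" using assms(4,6)
    by (simp add: finite_borel_measure_def finite_borel_measure_axioms_def)
  have spm: "space \<mu> = UNIV" using sets_eq_imp_space_eq[OF assms(3)] by simp
  have spn: "space \<nu> = UNIV" using sets_eq_imp_space_eq[OF assms(4)] by simp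
  have Um: "measure \<mu> (space \<mu>) = U" using assms(2,9) spm by (simp add: measure_def)
  have Un: "measure \<nu> (space \<nu>) = U" using assms(2,10) spn by (simp add: measure_def)
  show ?thesis
  proof
    assume D: "D_eps \<epsilon> \<mu> \<nu> = 0"
    have D': "D_eps \<epsilon> \<nu> \<mu> = 0" using D D_eps_sym by metis
    show "(SUP t\<in>{0<..<U}. ereal \<bar>qinv \<mu> t - qinv \<nu> t\<bar>) \<le> ereal (2 * \<epsilon>)"
    proof (rule SUP_least)
      fix t assume t: "t \<in> {0<..<U}"
      have 1: "qinv \<nu> t \<le> qinv \<mu> t + 2 * \<epsilon>"
        using qinv_shift[OF fm fn _ _ _ cdf_of_shift[OF fm fn D]] t Um Un by simp
      have 2: "qinv \<mu> t \<le> qinv \<nu> t + 2 * \<epsilon>"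
        using qinv_shift[OF fn fm _ _ _ cdf_of_shift[OF fn fm D']] t Um Un by simp
      show "ereal \<bar>qinv \<mu> t - qinv \<nu> t\<bar> \<le> ereal (2 * \<epsilon>)" using 1 2 by simp
    qed
  next
    assume S: "(SUP t\<in>{0<..<U}. ereal \<bar>qinv \<mu> t - qinv \<nu> t\<bar>) \<le> ereal (2 * \<epsilon>)"
    have bnd: "\<bar>qinv \<mu> t - qinv \<nu> t\<bar> \<le> 2 * \<epsilon>" if "t \<in> {0<..<U}" for t
      using S that by (simp add: SUP_le_iff)
    define Q where "Q = restrict_space lborel {0<..<U}"
    have mm: "qinv \<mu> \<in> borel_measurable Q" using qinv_meas[OF fm] Um by (simp add: Q_def)
    have mn: "qinv \<nu> \<in> borel_measurable Q" using qinv_meas[OF fn] Un by (simp add: Q_def)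
    have mp: "(\<lambda>t. (qinv \<mu> t, qinv \<nu> t)) \<in> measurable Q (borel \<Otimes>\<^sub>M borel)"
      using mm mn by (rule measurable_Pair)
    define \<pi> where "\<pi> = distr Q (borel \<Otimes>\<^sub>M borel) (\<lambda>t. (qinv \<mu> t, qinv \<nu> t))"
    have c: "\<pi> \<in> couplings \<mu> \<nu>"
      unfolding couplings_def
    proof (intro CollectI conjI)
      show "sets \<pi> = sets (borel \<Otimes>\<^sub>M borel)" by (simp add: \<pi>_def)
      have "distr \<pi> borel fst = distr Q borel (fst \<circ> (\<lambda>t. (qinv \<mu> t, qinv \<nu> t)))"
        unfolding \<pi>_def by (rule distr_distr[OF measurable_fst mp])
      also have "\<dots> = distr Q borel (qinv \<mu>)" by (simp add: comp_def)
      also have "\<dots> = \<mu>" using qinv_distr[OF fm] Um by (simp add: Q_def)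
      finally show "distr \<pi> borel fst = \<mu>" .
      have "distr \<pi> borel snd = distr Q borel (snd \<circ> (\<lambda>t. (qinv \<mu> t, qinv \<nu> t)))"
        unfolding \<pi>_def by (rule distr_distr[OF measurable_snd mp])
      also have "\<dots> = distr Q borel (qinv \<nu>)" by (simp add: comp_def)
      also have "\<dots> = \<nu>" using qinv_distr[OF fn] Un by (simp add: Q_def)
      finally show "distr \<pi> borel snd = \<nu>" .
    qed
    have "Measurable.pred (borel \<Otimes>\<^sub>M borel) (\<lambda>p::real\<times>real. \<bar>fst p - snd p\<bar> > 2 * \<epsilon>)"
      by measurable
    then have Bm: "{p::real\<times>real. \<bar>fst p - snd p\<bar> > 2 * \<epsilon>} \<in> sets (borel \<Otimes>\<^sub>M borel)"
      by (simp add: pred_def space_pair_measure)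
    have "emeasure \<pi> {p. \<bar>fst p - snd p\<bar> > 2 * \<epsilon>}
        = emeasure Q ((\<lambda>t. (qinv \<mu> t, qinv \<nu> t)) -` {p. \<bar>fst p - snd p\<bar> > 2 * \<epsilon>} \<inter> space Q)"
      unfolding \<pi>_def by (rule emeasure_distr[OF mp Bm])
    also have "(\<lambda>t. (qinv \<mu> t, qinv \<nu> t)) -` {p. \<bar>fst p - snd p\<bar> > 2 * \<epsilon>} \<inter> space Q = {}"
      using bnd by (force simp: Q_def)
    finally have z: "emeasure \<pi> {p. \<bar>fst p - snd p\<bar> > 2 * \<epsilon>} = 0" by simp
    have "D_eps \<epsilon> \<mu> \<nu> \<le> 0"
      unfolding D_eps_def using INF_lower[OF c, of "\<lambda>\<pi>. emeasure \<pi> {p. \<bar>fst p - snd p\<bar> > 2 * \<epsilon>}"] z by simp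
    then show "D_eps \<epsilon> \<mu> \<nu> = 0" by simp
  qed
qed

end
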